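(* Let $l\ge2$ be an integer and $r_1,\dots,r_{2l}\ge0$. Then $$(r_1+r_2)\Big(\prod_{j=2}^{l-1}(r_j+r_{j+1})\Big)(r_l+r_{l+1})\cdot(r_1+r_{l+2})\Big(\prod_{j=l+2}^{2l-1}(r_j+r_{j+1})\Big)(r_{2l}+r_{l+1})\ \ge\ \Big(\max_{1\le i\le 2l}r_i\Big)^2\Big(\prod_{j=1}^{2l}r_j\Big)'',$$ where $\big(\prod_{j=1}^{2l}r_j\big)''$ denotes the product of the $r_j$ with one maximal and one minimal factor removed; i.e. if $r_{i_1}\ge r_{i_2}\ge\dots\ge r_{i_{2l}}$ is a non-increasing rearrangement, the right-hand side is $r_{i_1}^2\prod_{j=2}^{2l-1}r_{i_j}$.
   Context: Empty products equal $1$. *)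

theory Defs
  imports "HOL-Analysis.Analysis"
begin

end

theory Submission
  imports Defs
begin

definition nx :: "nat \<Rightarrow> nat \<Rightarrow> nat" where "nx n k = (if Suc k = n then 0 else Suc k)"

lemma cyc_lt:
  fixes g :: "nat \<Rightarrow> real"
  assumes nn: "\<And>k. k < n \<Longrightarrow> g k \<ge> 0" and ab: "a < b" "b < n"
  shows "(\<Prod>k<n. g k + g (nx n k)) \<ge> g a * (\<Prod>k\<in>{..<n}-{b}. g k)"
proof -
  define wt where "wt k = (if a \<le> k \<and> k < b then g k else g (nx n k))" for k
  have "(\<Prod>k<n. wt k) \<le> (\<Prod>k<n. g k + g (nx n k))"
  proof (rule prod_mono)
    fix k assume "k \<in> {..<n}"
    then have "k < n" "nx n k < n" using ab by (auto simp: nx_def)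
    then show "0 \<le> wt k \<and> wt k \<le> g k + g (nx n k)"
      using nn[of k] nn[of "nx n k"] by (auto simp: wt_def)
  qed
  moreover have "(\<Prod>k<n. wt k) = g a * (\<Prod>k\<in>{..<n}-{b}. g k)"
  proof -
    have "(\<Prod>k<n. wt k) = (\<Prod>k\<in>{0..<a}. wt k) * (\<Prod>k\<in>{a..<b}. wt k) * (\<Prod>k\<in>{b..<n-1}. wt k) * wt (n-1)"
      using ab by (simp add: prod.atLeastLessThan_concat atLeast0LessThan[symmetric]
        flip: prod.atLeast0_lessThan_Suc)
    also have "(\<Prod>k\<in>{0..<a}. wt k) = (\<Prod>k\<in>{0..<a}. g (Suc k))"
      using ab by (intro prod.cong) (auto simp: wt_def nx_def)
    also have "\<dots> = (\<Prod>k\<in>{1..<Suc a}. g k)"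
      using prod.shift_bounds_Suc_ivl[of g 0 a] by simp
    also have "(\<Prod>k\<in>{a..<b}. wt k) = g a * (\<Prod>k\<in>{Suc a..<b}. g k)"
      using ab by (simp add: wt_def prod.atLeast_Suc_lessThan)
    also have "(\<Prod>k\<in>{b..<n-1}. wt k) = (\<Prod>k\<in>{b..<n-1}. g (Suc k))"
      using ab by (intro prod.cong) (auto simp: wt_def nx_def)
    also have "\<dots> = (\<Prod>k\<in>{Suc b..<n}. g k)"
      using prod.shift_bounds_Suc_ivl[of g b "n-1"] ab by simp
    also have "wt (n-1) = g 0"
      using ab by (auto simp: wt_def nx_def)
    finally have "(\<Prod>k<n. wt k) = g a * (((g 0 * (\<Prod>k\<in>{1..<Suc a}. g k)) * (\<Prod>k\<in>{Suc a..<b}. g k)) * (\<Prod>k\<in>{Suc b..<n}. g k))"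
      by (simp add: ac_simps)
    also have "g 0 * (\<Prod>k\<in>{1..<Suc a}. g k) = (\<Prod>k\<in>{0..<Suc a}. g k)"
      by (simp add: prod.atLeast_Suc_lessThan)
    also have "\<dots> * (\<Prod>k\<in>{Suc a..<b}. g k) = (\<Prod>k\<in>{0..<b}. g k)"
      using ab prod.atLeastLessThan_concat[of 0 "Suc a" b g] by simp
    also have "(\<Prod>k\<in>{0..<b}. g k) * (\<Prod>k\<in>{Suc b..<n}. g k) = (\<Prod>k\<in>{..<n}-{b}. g k)"
    proof -
      have "{..<n}-{b} = {0..<b} \<union> {Suc b..<n}" using ab by auto
      then show ?thesis by (simp add: prod.union_disjoint)
    qed
    finally show ?thesis by simp
  qed
  ultimately show ?thesis by simp
qed

lemma cyc_gt:
  fixes g :: "nat \<Rightarrow> real"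
  assumes nn: "\<And>k. k < n \<Longrightarrow> g k \<ge> 0" and ab: "b < a" "a < n"
  shows "(\<Prod>k<n. g k + g (nx n k)) \<ge> g a * (\<Prod>k\<in>{..<n}-{b}. g k)"
proof -
  define wt where "wt k = (if b \<le> k \<and> k < a then g (Suc k) else g k)" for k
  have "(\<Prod>k<n. wt k) \<le> (\<Prod>k<n. g k + g (nx n k))"
  proof (rule prod_mono)
    fix k assume "k \<in> {..<n}"
    then have "k < n" "nx n k < n" using ab by (auto simp: nx_def)
    then show "0 \<le> wt k \<and> wt k \<le> g k + g (nx n k)"
      using nn[of k] nn[of "nx n k"] nn[of "Suc k"] ab by (auto simp: wt_def nx_def)
  qed
  moreover have "(\<Prod>k<n. wt k) = g a * (\<Prod>k\<in>{..<n}-{b}. g k)"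
  proof -
    have "(\<Prod>k<n. wt k) = (\<Prod>k\<in>{0..<b}. wt k) * (\<Prod>k\<in>{b..<a}. wt k) * (\<Prod>k\<in>{a..<n}. wt k)"
      using ab prod.atLeastLessThan_concat[of 0 b a wt] prod.atLeastLessThan_concat[of 0 a n wt]
      by (simp add: atLeast0LessThan)
    also have "(\<Prod>k\<in>{0..<b}. wt k) = (\<Prod>k\<in>{0..<b}. g k)"
      using ab by (intro prod.cong) (auto simp: wt_def)
    also have "(\<Prod>k\<in>{b..<a}. wt k) = (\<Prod>k\<in>{b..<a}. g (Suc k))"
      using ab by (intro prod.cong) (auto simp: wt_def)
    also have "\<dots> = (\<Prod>k\<in>{Suc b..<Suc a}. g k)"
      using prod.shift_bounds_Suc_ivl[of g b a] by simp
    also have "(\<Prod>k\<in>{a..<n}. wt k) = (\<Prod>k\<in>{a..<n}. g k)"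
      using ab by (intro prod.cong) (auto simp: wt_def)
    also have "\<dots> = g a * (\<Prod>k\<in>{Suc a..<n}. g k)"
      using ab by (simp add: prod.atLeast_Suc_lessThan)
    finally have "(\<Prod>k<n. wt k) = g a * ((\<Prod>k\<in>{0..<b}. g k) * ((\<Prod>k\<in>{Suc b..<Suc a}. g k) * (\<Prod>k\<in>{Suc a..<n}. g k)))"
      by (simp add: ac_simps)
    also have "(\<Prod>k\<in>{Suc b..<Suc a}. g k) * (\<Prod>k\<in>{Suc a..<n}. g k) = (\<Prod>k\<in>{Suc b..<n}. g k)"
      using ab prod.atLeastLessThan_concat[of "Suc b" "Suc a" n g] by simp
    also have "(\<Prod>k\<in>{0..<b}. g k) * (\<Prod>k\<in>{Suc b..<n}. g k) = (\<Prod>k\<in>{..<n}-{b}. g k)"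
    proof -
      have "{..<n}-{b} = {0..<b} \<union> {Suc b..<n}" using ab by auto
      then show ?thesis by (simp add: prod.union_disjoint)
    qed
    finally show ?thesis by simp
  qed
  ultimately show ?thesis by simp
qed

lemma cyc:
  fixes g :: "nat \<Rightarrow> real"
  assumes nn: "\<And>k. k < n \<Longrightarrow> g k \<ge> 0" and ab: "a \<noteq> b" "a < n" "b < n"
  shows "(\<Prod>k<n. g k + g (nx n k)) \<ge> g a * g a * (\<Prod>k\<in>{..<n}-{a,b}. g k)"
proof -
  have "(\<Prod>k<n. g k + g (nx n k)) \<ge> g a * (\<Prod>k\<in>{..<n}-{b}. g k)"
  proof (cases "a < b")
    case True
    show ?thesis using cyc_lt[of n g a b] nn True ab by blast
  next
    case False
    then have "b < a" using ab by simp
    show ?thesis using cyc_gt[of n g b a] nn \<open>b < a\<close> ab by blast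
  qed
  moreover have "(\<Prod>k\<in>{..<n}-{b}. g k) = g a * (\<Prod>k\<in>{..<n}-{a,b}. g k)"
  proof -
    have "{..<n}-{b} = insert a ({..<n}-{a,b})" using ab by auto
    moreover have "a \<notin> {..<n}-{a,b}" by simp
    ultimately show ?thesis by (metis finite_Diff finite_lessThan prod.insert)
  qed
  ultimately show ?thesis by (simp add: mult.assoc)
qed

definition sig :: "nat \<Rightarrow> nat \<Rightarrow> nat" where
  "sig l k = (if k \<le> l then k + 1 else 3*l + 1 - k)"
definition isig :: "nat \<Rightarrow> nat \<Rightarrow> nat" where
  "isig l j = (if j \<le> l + 1 then j - 1 else 3*l + 1 - j)"

lemma sig_isig: "l \<ge> 2 \<Longrightarrow> j \<in> {1..2*l} \<Longrightarrow> sig l (isig l j) = j \<and> isig l j < 2*l"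
  by (auto simp: sig_def isig_def)
lemma isig_sig: "l \<ge> 2 \<Longrightarrow> k < 2*l \<Longrightarrow> isig l (sig l k) = k \<and> sig l k \<in> {1..2*l}"
  by (auto simp: sig_def isig_def)

lemma lhs_eq:
  fixes r :: "nat \<Rightarrow> real"
  assumes l: "l \<ge> 2"
  shows "(r 1 + r 2) * (\<Prod>j\<in>{2..l-1}. r j + r (j+1)) * (r l + r (l+1))
         * (r 1 + r (l+2)) * (\<Prod>j\<in>{l+2..2*l-1}. r j + r (j+1)) * (r (2*l) + r (l+1))
       = (\<Prod>k<2*l. r (sig l k) + r (sig l (nx (2*l) k)))"
proof -
  define E where "E k = r (sig l k) + r (sig l (nx (2*l) k))" for k
  have "(\<Prod>k<2*l. E k) = (\<Prod>k\<in>{0..<l}. E k) * (\<Prod>k\<in>{l..<2*l}. E k)"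
    using prod.atLeastLessThan_concat[of 0 l "2*l" E] by (simp add: atLeast0LessThan)
  also have "(\<Prod>k\<in>{0..<l}. E k) = (\<Prod>k\<in>{0..<l}. r (Suc k) + r (Suc (Suc k)))"
    using l by (intro prod.cong) (auto simp: E_def sig_def nx_def)
  also have "\<dots> = (\<Prod>k\<in>{1..<Suc l}. r k + r (Suc k))"
    using prod.shift_bounds_Suc_ivl[of "\<lambda>k. r k + r (Suc k)" 0 l] by simp
  also have "\<dots> = (r 1 + r 2) * (\<Prod>j\<in>{2..l-1}. r j + r (j+1)) * (r l + r (l+1))"
  proof -
    have "(\<Prod>k\<in>{1..<Suc l}. r k + r (Suc k)) = (r 1 + r 2) * (\<Prod>k\<in>{2..<Suc l}. r k + r (Suc k))"
      using l by (simp add: prod.atLeast_Suc_lessThan numeral_2_eq_2)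
    also have "(\<Prod>k\<in>{2..<Suc l}. r k + r (Suc k)) = (\<Prod>k\<in>{2..<l}. r k + r (Suc k)) * (r l + r (Suc l))"
      using l by simp
    also have "{2..<l} = {2..l-1}" using l by auto
    finally show ?thesis by (simp add: mult.assoc)
  qed
  also have "(\<Prod>k\<in>{l..<2*l}. E k) = E l * (\<Prod>k\<in>{Suc l..<2*l-1}. E k) * E (2*l-1)"
  proof -
    have "(\<Prod>k\<in>{l..<2*l}. E k) = E l * (\<Prod>k\<in>{Suc l..<2*l}. E k)"
      using l by (simp add: prod.atLeast_Suc_lessThan)
    also have "{Suc l..<2*l} = insert (2*l-1) {Suc l..<2*l-1}" using l by auto
    finally show ?thesis by simp
  qed
  also have "E l = r (2*l) + r (l+1)"
    using l by (simp add: E_def sig_def nx_def)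
  also have "E (2*l-1) = r 1 + r (l+2)"
    using l by (auto simp: E_def sig_def nx_def)
  also have "(\<Prod>k\<in>{Suc l..<2*l-1}. E k) = (\<Prod>j\<in>{l+2..2*l-1}. r j + r (j+1))"
  proof (rule prod.reindex_bij_witness[where i="\<lambda>j. 3*l - j" and j="\<lambda>k. 3*l - k"])
    fix a assume "a \<in> {Suc l..<2*l-1}"
    then show "3*l - (3*l - a) = a" "3*l - a \<in> {l+2..2*l-1}"
      "r (3*l - a) + r (3*l - a + 1) = E a" using l
      by (auto simp: E_def sig_def nx_def Suc_diff_le)
  next
    fix b assume "b \<in> {l+2..2*l-1}"
    then show "3*l - (3*l - b) = b" "3*l - b \<in> {Suc l..<2*l-1}" using l by auto
  qed
  finally show ?thesis by (simp add: E_def ac_simps)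
qed


theorem lemma3p5:
  fixes l :: nat and r :: "nat \<Rightarrow> real" and imax imin :: nat
  assumes "l \<ge> 2"
    and "\<And>i. i \<in> {1..2*l} \<Longrightarrow> r i \<ge> 0"
    and "imax \<in> {1..2*l}" and "imin \<in> {1..2*l}" and "imax \<noteq> imin"
    and "\<And>i. i \<in> {1..2*l} \<Longrightarrow> r i \<le> r imax"
    and "\<And>i. i \<in> {1..2*l} \<Longrightarrow> r imin \<le> r i"
  shows "(r 1 + r 2) * (\<Prod>j\<in>{2..l-1}. r j + r (j+1)) * (r l + r (l+1))
         * (r 1 + r (l+2)) * (\<Prod>j\<in>{l+2..2*l-1}. r j + r (j+1)) * (r (2*l) + r (l+1))
         \<ge> (Max (r ` {1..2*l}))^2 * (\<Prod>j\<in>{1..2*l} - {imax, imin}. r j)"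
proof -
  note l = assms(1)
  define g where "g k = r (sig l k)" for k
  define a where "a = isig l imax"
  define b where "b = isig l imin"
  have a: "sig l a = imax" "a < 2*l" using sig_isig[OF l assms(3)] by (auto simp: a_def)
  have b: "sig l b = imin" "b < 2*l" using sig_isig[OF l assms(4)] by (auto simp: b_def)
  have ab: "a \<noteq> b" using a b assms(5) by auto
  have nn: "\<And>k. k < 2*l \<Longrightarrow> g k \<ge> 0"
    using isig_sig[OF l] assms(2) by (auto simp: g_def)
  have "(\<Prod>k<2*l. g k + g (nx (2*l) k)) \<ge> g a * g a * (\<Prod>k\<in>{..<2*l}-{a,b}. g k)"
    by (rule cyc[OF nn ab a(2) b(2)])
  moreover have "(\<Prod>k\<in>{..<2*l}-{a,b}. g k) = (\<Prod>j\<in>{1..2*l} - {imax, imin}. r j)"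
  proof (rule prod.reindex_bij_witness[where i="isig l" and j="sig l"])
    fix k assume k: "k \<in> {..<2*l}-{a,b}"
    then have "k < 2*l" by simp
    note h = isig_sig[OF l this]
    show "isig l (sig l k) = k" using h by simp
    show "r (sig l k) = g k" by (simp add: g_def)
    show "sig l k \<in> {1..2*l} - {imax, imin}"
      using h k a_def b_def by (metis Diff_iff insertCI insertE lessThan_iff singletonD)
  next
    fix j assume j: "j \<in> {1..2*l} - {imax, imin}"
    then have "j \<in> {1..2*l}" by simp
    note h = sig_isig[OF l this]
    show "sig l (isig l j) = j" using h by simp
    show "isig l j \<in> {..<2*l}-{a,b}" using h j a b by (metis Diff_iff insertCI insertE lessThan_iff singletonD)
  qed
  moreover have "Max (r ` {1..2*l}) = r imax"
    using assms(3,6) by (intro Max_eqI) auto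
  moreover have "g a = r imax" using a by (simp add: g_def)
  ultimately show ?thesis
    using lhs_eq[OF l, of r] by (simp add: g_def power2_eq_square)
qed

end
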